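(* Let $0<R<1$ and let $f$ be a circular tractrix with parameter $R$ and constants $c_1^2-c_2^2=1$. Then $f'(t)=0$ if and only if $t\in\frac{\pi}{\lambda}\mathbb Z$. Moreover, for every $n\in\mathbb Z$ the length of the arc $f|_{[n\pi/\lambda,(n+1)\pi/\lambda]}$ between two consecutive singular points equals $$\operatorname{sign}(c_1)\,\ln\left|\frac{c_1+R}{c_1-R}\right|,$$ which is finite and positive.
   Context: Fix $0<R<1$, $\lambda=\frac{\sqrt{1-R^2}}{R}$, and real constants $c_1,c_2$ with $c_1^2-c_2^2=1$. The circular tractrix is $f(t)=\big(\xi_1\cos\tfrac tR+\xi_2\sin\tfrac tR,\ -\xi_2\cos\tfrac tR+\xi_1\sin\tfrac tR,\ \xi_3\big)$, $t\in\mathbb R$, with $\xi_1=\frac{(R-\frac1R)\cos\lambda t}{\frac{c_1}{R}+\cos\lambda t}$, $\xi_2=-\frac{\lambda\sin\lambda t}{\frac{c_1}{R}+\cos\lambda t}$, $\xi_3=\frac{\lambda c_2}{\frac{c_1}{R}+\cos\lambda t}$. *)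

theory Defs
  imports "HOL-Analysis.Analysis"
begin

definition tr_lambda :: "real \<Rightarrow> real" where
  "tr_lambda R = sqrt (1 - R\<^sup>2) / R"

definition circ_tractrix :: "real \<Rightarrow> real \<Rightarrow> real \<Rightarrow> real \<Rightarrow> real^3" where
  "circ_tractrix R c1 c2 t =
    (let l = tr_lambda R;
         den = c1 / R + cos (l * t);
         x1 = (R - 1 / R) * cos (l * t) / den;
         x2 = - (l * sin (l * t)) / den;
         x3 = l * c2 / den
     in vector [x1 * cos (t / R) + x2 * sin (t / R),
                - x2 * cos (t / R) + x1 * sin (t / R),
                x3])"

end

theory Submission
  imports Defs
begin


lemma vec3_decomp: "(vector [x,y,z] :: real^3) = x *\<^sub>R axis 1 1 + y *\<^sub>R axis 2 1 + z *\<^sub>R axis 3 1"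
  by (simp add: vec_eq_iff forall_3 axis_def)

lemma vec3_deriv:
  assumes "(X has_real_derivative X') (at t)" "(Y has_real_derivative Y') (at t)" "(Z has_real_derivative Z') (at t)"
  shows "((\<lambda>t. vector [X t, Y t, Z t] :: real^3) has_vector_derivative vector [X', Y', Z']) (at t)"
proof -
  have "((\<lambda>t. X t *\<^sub>R (axis 1 1::real^3) + Y t *\<^sub>R axis 2 1 + Z t *\<^sub>R axis 3 1) has_vector_derivative
     X' *\<^sub>R (axis 1 1::real^3) + Y' *\<^sub>R axis 2 1 + Z' *\<^sub>R axis 3 1) (at t)"
    using assms by (auto intro!: derivative_eq_intros simp: has_real_derivative_iff_has_vector_derivative)
  then show ?thesis by (simp add: vec3_decomp)
qed

lemma norm_vec3: "norm (vector [x,y,z] :: real^3) = sqrt (x\<^sup>2 + y\<^sup>2 + z\<^sup>2)"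
  by (simp add: norm_vec_def L2_set_def sum_3)

lemma rot_sq:
  fixes pp qq :: real
  assumes "pp\<^sup>2 + qq\<^sup>2 = 1"
  shows "(d1*qq - x1*r*pp + d2*pp + x2*r*qq)\<^sup>2 + (-d2*qq + x2*r*pp + d1*pp + x1*r*qq)\<^sup>2 = (d1 + x2*r)\<^sup>2 + (x1*r - d2)\<^sup>2"
  using assms by algebra

lemma key:
  fixes R c1 c2 L w c D :: real
  assumes "R > 0" "D = c1/R + c" "D \<noteq> 0" "w\<^sup>2 + c\<^sup>2 = 1" "c2\<^sup>2 = c1\<^sup>2 - 1" "L\<^sup>2 = (1 - R\<^sup>2)/R\<^sup>2"
  shows "(L^3*c1*w/D\<^sup>2 + (-(L*w)/D)/R)\<^sup>2 + (((R-1/R)*c/D)/R - (-(L\<^sup>2*((c1/R)*c+1))/D\<^sup>2))\<^sup>2 + (L\<^sup>2*c2*w/D\<^sup>2)\<^sup>2 = (L*w/D)\<^sup>2"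
proof -
  have c1: "c1 = R*(D - c)" using assms(1,2) by (simp add: field_simps)
  have L3: "L^3 = L * ((1 - R\<^sup>2)/R\<^sup>2)" using assms(6) by (simp add: power3_eq_cube power2_eq_square)
  have T1: "L^3*c1*w/D\<^sup>2 + (-(L*w)/D)/R = -L*w*(R*c1+c)/(R*D\<^sup>2)"
    unfolding L3 c1 using assms(1,3) by (simp add: field_simps power2_eq_square)
  have T2: "((R-1/R)*c/D)/R - (-(L\<^sup>2*((c1/R)*c+1))/D\<^sup>2) = L\<^sup>2*w\<^sup>2/D\<^sup>2"
  proof -
    have w2: "w\<^sup>2 = 1 - c\<^sup>2" using assms(4) by simp
    show ?thesis unfolding w2 assms(6) c1 using assms(1,3) by (simp add: field_simps power2_eq_square)
  qed
  have B: "(R*c1+c)\<^sup>2/R\<^sup>2 + L\<^sup>2*w\<^sup>2 + L\<^sup>2*c2\<^sup>2 = D\<^sup>2"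
  proof -
    have w2: "w\<^sup>2 = 1 - c\<^sup>2" using assms(4) by simp
    show ?thesis unfolding w2 assms(6) assms(5) using assms(1) unfolding c1 by (simp add: field_simps power2_eq_square)
  qed
  have "(-L*w*(R*c1+c)/(R*D\<^sup>2))\<^sup>2 + (L\<^sup>2*w\<^sup>2/D\<^sup>2)\<^sup>2 + (L\<^sup>2*c2*w/D\<^sup>2)\<^sup>2
     = (L*w/D\<^sup>2)\<^sup>2 * ((R*c1+c)\<^sup>2/R\<^sup>2 + L\<^sup>2*w\<^sup>2 + L\<^sup>2*c2\<^sup>2)"
    using assms(1,3) by (simp add: field_simps power2_eq_square)
  also have "\<dots> = (L*w/D)\<^sup>2" unfolding B using assms(3) by (simp add: field_simps power2_eq_square)
  finally show ?thesis unfolding T1 T2 .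
qed

lemma lam_facts:
  fixes R :: real
  assumes "0 < R" "R < 1"
  shows "tr_lambda R > 0" "(tr_lambda R)\<^sup>2 = (1 - R\<^sup>2)/R\<^sup>2"
proof -
  have "R * R < 1 * 1" using mult_strict_mono[of R 1 R 1] assms by simp
  then have "R\<^sup>2 < 1" by (simp add: power2_eq_square)
  then show "tr_lambda R > 0" "(tr_lambda R)\<^sup>2 = (1 - R\<^sup>2)/R\<^sup>2"
    unfolding tr_lambda_def using assms by (auto simp: power_divide)
qed

lemma den_sign:
  fixes R c1 c2 x :: real
  assumes "0 < R" "R < 1" "c1\<^sup>2 - c2\<^sup>2 = 1"
  shows "sgn c1 * (c1 / R + cos x) > 0"
proof -
  have "\<not> \<bar>c1\<bar> < 1" using assms(3) abs_square_less_1[of c1] by (smt (verit) zero_le_power2)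
  then have "\<bar>c1\<bar> \<ge> 1" by simp
  show ?thesis
  proof (cases "c1 > 0")
    case True
    then have "c1 / R > 1" using \<open>\<bar>c1\<bar> \<ge> 1\<close> assms by (simp add: field_simps)
    moreover have "cos x \<ge> -1" by simp
    ultimately have "c1/R + cos x > 0" by linarith
    then show ?thesis using True by simp
  next
    case False
    then have "c1 / R < -1" using \<open>\<bar>c1\<bar> \<ge> 1\<close> assms by (simp add: field_simps)
    moreover have "cos x \<le> 1" by simp
    moreover have "c1 \<noteq> 0" using \<open>\<bar>c1\<bar> \<ge> 1\<close> by auto
    ultimately have "c1/R + cos x < 0" "c1 < 0" using False by linarith+
    then show ?thesis by (simp add: mult_neg_neg)
  qed
qed

lemma speed:
  fixes R c1 c2 t :: real
  assumes R: "0 < R" "R < 1" and c: "c1\<^sup>2 - c2\<^sup>2 = 1"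
  shows "\<exists>V. (circ_tractrix R c1 c2 has_vector_derivative V) (at t) \<and>
     norm V = tr_lambda R * \<bar>sin (tr_lambda R * t)\<bar> / \<bar>c1 / R + cos (tr_lambda R * t)\<bar>"
proof -
  define L where "L = tr_lambda R"
  have L: "L > 0" "L\<^sup>2 = (1 - R\<^sup>2)/R\<^sup>2" using lam_facts[OF R] by (auto simp: L_def)
  have Dnz: "c1 / R + cos (L * x) \<noteq> 0" for x using den_sign[OF R c, of "L*x"] by auto
  define Dt where "Dt = c1 / R + cos (L * t)"
  define c where "c = cos (L * t)"
  define w where "w = sin (L * t)"
  have Dt: "Dt \<noteq> 0" "Dt = c1/R + c" using Dnz by (auto simp: Dt_def c_def)
  define x1 where "x1 = (\<lambda>t. (R - 1 / R) * cos (L * t) / (c1 / R + cos (L * t)))"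
  define x2 where "x2 = (\<lambda>t. - (L * sin (L * t)) / (c1 / R + cos (L * t)))"
  define x3 where "x3 = (\<lambda>t. L * c2 / (c1 / R + cos (L * t)))"
  have f: "circ_tractrix R c1 c2 = (\<lambda>t. vector [x1 t * cos (t / R) + x2 t * sin (t / R),
                - x2 t * cos (t / R) + x1 t * sin (t / R), x3 t])"
    unfolding circ_tractrix_def Let_def x1_def x2_def x3_def L_def by (rule refl)
  define d1 where "d1 = L^3*c1*w/Dt\<^sup>2"
  define d2 where "d2 = -(L\<^sup>2*((c1/R)*c+1))/Dt\<^sup>2"
  define d3 where "d3 = L\<^sup>2*c2*w/Dt\<^sup>2"
  have c1eq: "c1 = R*(Dt - c)" using Dt(2) R(1) by (simp add: field_simps)
  have L3: "L^3 = L*((1-R\<^sup>2)/R\<^sup>2)" using L(2) by (simp add: power3_eq_cube power2_eq_square)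
  have wc: "w\<^sup>2 + c\<^sup>2 = 1" by (simp add: w_def c_def)
  have ww: "w*w = 1 - c*c" using wc by (simp add: power2_eq_square)
  have D1: "(x1 has_real_derivative d1) (at t)"
    unfolding x1_def
    apply (rule derivative_eq_intros refl | rule Dnz)+
    unfolding d1_def L3 using Dt(1) R
    apply (fold Dt_def c_def w_def)
    apply (subst c1eq)
    by (simp add: field_simps power2_eq_square)
  have D2: "(x2 has_real_derivative d2) (at t)"
    unfolding x2_def
    apply (rule derivative_eq_intros refl | rule Dnz)+
    unfolding d2_def using Dt(1) R
    apply (fold Dt_def c_def w_def)
    apply (subst c1eq)
    using wc by (simp add: field_simps power2_eq_square ww)
  have D3: "(x3 has_real_derivative d3) (at t)"
    unfolding x3_def
    apply (rule derivative_eq_intros refl | rule Dnz)+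
    unfolding d3_def using Dt R
    apply (fold Dt_def c_def w_def)
    by (simp add: field_simps power2_eq_square)
  have Rnz: "R \<noteq> 0" using R by simp
  define qq where "qq = cos (t/R)"
  define pp where "pp = sin (t/R)"
  define r where "r = 1/R"
  define X' where "X' = d1*qq - x1 t*r*pp + d2*pp + x2 t*r*qq"
  define Y' where "Y' = -d2*qq + x2 t*r*pp + d1*pp + x1 t*r*qq"
  have DX: "((\<lambda>t. x1 t * cos (t / R) + x2 t * sin (t / R)) has_real_derivative X') (at t)"
    apply (rule derivative_eq_intros refl D1 D2 Rnz)+
    unfolding X'_def qq_def pp_def r_def by (simp add: algebra_simps)
  have DY: "((\<lambda>t. - x2 t * cos (t / R) + x1 t * sin (t / R)) has_real_derivative Y') (at t)"
    apply (rule derivative_eq_intros refl D1 D2 Rnz)+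
    unfolding Y'_def qq_def pp_def r_def by (simp add: algebra_simps)
  have V: "(circ_tractrix R c1 c2 has_vector_derivative vector [X', Y', d3]) (at t)"
    unfolding f by (rule vec3_deriv[OF DX DY D3])
  have pq: "pp\<^sup>2 + qq\<^sup>2 = 1" by (simp add: pp_def qq_def)
  have "norm (vector [X', Y', d3] :: real^3) = sqrt ((d1 + x2 t*r)\<^sup>2 + (x1 t*r - d2)\<^sup>2 + d3\<^sup>2)"
    unfolding norm_vec3 X'_def Y'_def rot_sq[OF pq] ..
  also have "(d1 + x2 t*r)\<^sup>2 + (x1 t*r - d2)\<^sup>2 + d3\<^sup>2 = (L*w/Dt)\<^sup>2"
  proof -
    have "c2\<^sup>2 = c1\<^sup>2 - 1" using c by simp
    from key[OF R(1) Dt(2) Dt(1) wc this L(2)] show ?thesis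
      unfolding d1_def d2_def d3_def x1_def x2_def r_def
      apply (fold Dt_def c_def w_def)
      by (simp add: field_simps)
  qed
  also have "sqrt ((L*w/Dt)\<^sup>2) = tr_lambda R * \<bar>sin (tr_lambda R * t)\<bar> / \<bar>c1 / R + cos (tr_lambda R * t)\<bar>"
    using L(1) by (simp add: L_def w_def Dt_def abs_mult)
  finally show ?thesis using V by blast
qed

lemma sgn_stuff:
  fixes R c1 c2 :: real
  assumes "0 < R" "R < 1" "c1\<^sup>2 - c2\<^sup>2 = 1"
  shows "sgn c1 * (ln (sgn c1 * (c1/R + 1)) - ln (sgn c1 * (c1/R - 1))) = sgn c1 * ln \<bar>(c1 + R) / (c1 - R)\<bar>"
    and "sgn c1 * ln \<bar>(c1 + R) / (c1 - R)\<bar> > 0"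
proof -
  define S where "S = sgn c1"
  have p1: "S * (c1/R + 1) > 0" using den_sign[OF assms, of 0] by (simp add: S_def)
  have p2: "S * (c1/R - 1) > 0" using den_sign[OF assms, of pi] by (simp add: S_def)
  have c1: "c1 \<noteq> 0" using p1 by (auto simp: S_def)
  have S: "S = 1 \<or> S = -1" using c1 by (auto simp: S_def sgn_if)
  have cR: "c1 - R \<noteq> 0" using p2 assms(1) by (auto simp: field_simps)
  have rat: "(S * (c1/R + 1)) / (S * (c1/R - 1)) = (c1 + R) / (c1 - R)"
    using S cR assms(1) by (auto simp: field_simps)
  have rpos: "(c1 + R) / (c1 - R) > 0" using rat p1 p2 by (metis divide_pos_pos)
  have e: "ln (S * (c1/R + 1)) - ln (S * (c1/R - 1)) = ln \<bar>(c1 + R) / (c1 - R)\<bar>"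
    unfolding abs_of_pos[OF rpos] using ln_divide_pos[OF p1 p2] unfolding rat by simp
  then show "sgn c1 * (ln (sgn c1 * (c1/R + 1)) - ln (sgn c1 * (c1/R - 1))) = sgn c1 * ln \<bar>(c1 + R) / (c1 - R)\<bar>"
    by (simp add: S_def)
  have "S * (ln (S * (c1/R + 1)) - ln (S * (c1/R - 1))) > 0"
    using S
  proof
    assume "S = 1" then show ?thesis using p1 p2 by simp
  next
    assume "S = -1" then show ?thesis using p1 p2 by simp
  qed
  then show "sgn c1 * ln \<bar>(c1 + R) / (c1 - R)\<bar> > 0" using e by (simp add: S_def)
qed

theorem mainTheorem12:
  fixes R c1 c2 :: real
  assumes "0 < R" and "R < 1" and "c1\<^sup>2 - c2\<^sup>2 = 1"
  shows "(\<forall>t. circ_tractrix R c1 c2 differentiable (at t))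
    \<and> (\<forall>t. vector_derivative (circ_tractrix R c1 c2) (at t) = 0
            \<longleftrightarrow> (\<exists>n::int. t = of_int n * pi / tr_lambda R))
    \<and> (\<forall>n::int.
          (\<lambda>t. norm (vector_derivative (circ_tractrix R c1 c2) (at t)))
             integrable_on {of_int n * pi / tr_lambda R .. (of_int n + 1) * pi / tr_lambda R}
        \<and> integral {of_int n * pi / tr_lambda R .. (of_int n + 1) * pi / tr_lambda R}
             (\<lambda>t. norm (vector_derivative (circ_tractrix R c1 c2) (at t)))
          = sgn c1 * ln \<bar>(c1 + R) / (c1 - R)\<bar>
        \<and> sgn c1 * ln \<bar>(c1 + R) / (c1 - R)\<bar> > 0)"
proof -
  define L where "L = tr_lambda R"
  have L: "L > 0" using lam_facts[OF assms(1,2)] by (simp add: L_def)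
  define f where "f = circ_tractrix R c1 c2"
  define g where "g = (\<lambda>t. L * \<bar>sin (L*t)\<bar> / \<bar>c1/R + cos (L*t)\<bar>)"
  define S where "S = sgn c1"
  have Dpos: "S * (c1/R + cos x) > 0" for x using den_sign[OF assms] by (simp add: S_def)
  have S: "S = 1 \<or> S = -1" using Dpos[of 0] by (auto simp: S_def sgn_if split: if_splits)
  have vd: "f differentiable (at t) \<and> norm (vector_derivative f (at t)) = g t" for t
  proof -
    obtain V where V: "(f has_vector_derivative V) (at t)" "norm V = g t"
      using speed[OF assms, of t] by (auto simp: f_def g_def L_def)
    show ?thesis using V vector_derivative_at[OF V(1)] differentiableI_vector[OF V(1)] by simp
  qed
  have part2: "vector_derivative f (at t) = 0 \<longleftrightarrow> (\<exists>n::int. t = of_int n * pi / L)" for t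
  proof -
    have "vector_derivative f (at t) = 0 \<longleftrightarrow> g t = 0" using vd[of t] by (metis norm_eq_zero)
    also have "\<dots> \<longleftrightarrow> sin (L*t) = 0" using L Dpos[of "L*t"] by (auto simp: g_def)
    also have "\<dots> \<longleftrightarrow> (\<exists>n::int. L*t = of_int n * pi)" by (rule sin_zero_iff_int2)
    also have "\<dots> \<longleftrightarrow> (\<exists>n::int. t = of_int n * pi / L)" using L by (auto simp: field_simps)
    finally show ?thesis .
  qed
  have part3: "(\<lambda>t. norm (vector_derivative f (at t))) integrable_on {of_int n * pi / L .. (of_int n + 1) * pi / L}
        \<and> integral {of_int n * pi / L .. (of_int n + 1) * pi / L} (\<lambda>t. norm (vector_derivative f (at t)))
          = sgn c1 * ln \<bar>(c1 + R) / (c1 - R)\<bar>" for n :: int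
  proof -
    define a where "a = of_int n * pi / L"
    define b where "b = (of_int n + 1) * pi / L"
    define e where "e = cos (of_int n * pi)"
    have sn: "sin (of_int n * pi) = 0" by (metis sin_npi_int mult.commute)
    have e2: "e = 1 \<or> e = -1"
    proof -
      have "e\<^sup>2 = 1" using sin_cos_squared_add[of "of_int n * pi"] sn by (simp add: e_def)
      then show ?thesis by (simp add: power2_eq_1_iff)
    qed
    have ab: "a \<le> b" using L by (simp add: a_def b_def divide_right_mono)
    have Lnz: "L \<noteq> 0" using L by simp
    have La: "L * a = of_int n * pi" and Lb: "L * b = of_int n * pi + pi" using Lnz
      by (simp_all add: a_def b_def field_simps)
    have sinrel: "sin (of_int n * pi + y) = e * sin y" for y by (simp add: sin_add sn e_def)
    have cosa: "cos (L*a) = e" using La by (simp add: e_def)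
    have cosb: "cos (L*b) = -e" using Lb by (simp add: cos_add sn e_def)
    define Phi where "Phi = (\<lambda>t. - ln (S * (c1/R + cos (L*t))))"
    define h where "h = (\<lambda>t. S * e * (L * sin (L*t) / (c1/R + cos (L*t))))"
    have dPhi: "((\<lambda>t. S * e * Phi t) has_vector_derivative h t) (at t within {a..b})" for t
    proof -
      have nz: "S * (c1/R + cos (L*t)) \<noteq> 0" using Dpos[of "L*t"] by linarith
      have "((\<lambda>t. S * e * Phi t) has_real_derivative h t) (at t)"
        unfolding Phi_def h_def
        apply (rule derivative_eq_intros refl | rule Dpos)+
        using nz S by (auto simp: field_simps)
      then show ?thesis by (simp add: has_real_derivative_iff_has_vector_derivative has_vector_derivative_at_within)
    qed
    have int: "(h has_integral (S * e * Phi b - S * e * Phi a)) {a..b}"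
      by (rule fundamental_theorem_of_calculus[OF ab]) (rule dPhi)
    have gh: "norm (vector_derivative f (at t)) = h t" if t: "t \<in> {a..b}" for t
    proof -
      define y where "y = L*t - of_int n * pi"
      have y: "0 \<le> y" "y \<le> pi" using t L La Lb mult_left_mono[of a t L] mult_left_mono[of t b L]
        by (auto simp: y_def)
      have "sin (L*t) = e * sin y" using sinrel[of y] by (simp add: y_def)
      moreover have "sin y \<ge> 0" using y by (simp add: sin_ge_zero)
      ultimately have "\<bar>sin (L*t)\<bar> = e * sin (L*t)" using e2 by auto
      moreover have "\<bar>c1/R + cos (L*t)\<bar> = S * (c1/R + cos (L*t))" using Dpos[of "L*t"] S by auto
      ultimately show ?thesis using vd[of t] S Dpos[of "L*t"] unfolding g_def h_def
        by (auto simp: field_simps)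
    qed
    have val: "S * e * Phi b - S * e * Phi a = sgn c1 * ln \<bar>(c1 + R) / (c1 - R)\<bar>"
      using e2
    proof
      assume "e = 1"
      then show ?thesis using sgn_stuff(1)[OF assms] cosa cosb unfolding Phi_def S_def by (simp add: algebra_simps)
    next
      assume "e = -1"
      then show ?thesis using sgn_stuff(1)[OF assms] cosa cosb unfolding Phi_def S_def by (simp add: algebra_simps)
    qed
    have "((\<lambda>t. norm (vector_derivative f (at t))) has_integral sgn c1 * ln \<bar>(c1 + R) / (c1 - R)\<bar>) {a..b}"
      using int val has_integral_cong[of "{a..b}", OF gh] by simp
    then show ?thesis unfolding a_def b_def by (auto simp: integral_unique has_integral_integrable)
  qed
  show ?thesis
    using vd part2 part3 sgn_stuff(2)[OF assms] unfolding f_def L_def by blast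
qed
end
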